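(* Consider the quantized estimation system below under the identical-models assumption, with sensors grouped into groups $\mathcal{G}_p$ ($p=1,\dots,P$, $P<N$) having identical observation statistical models $(\hat{\mathscr{X}}_p,\hat{\mathscr{F}}_p,\hat{\mathscr{P}}_p^{\boldsymbol{\theta}})$, and each $\mathcal{G}_p$ split into $M_p$ disjoint nonempty subgroups $\mathcal{G}_p^{(m)}$ whose sensors all use the same superquantizer $\hat\Gamma_p^{(m)}=[\hat\gamma_{p1}^{(m)},\dots,\hat\gamma_{pL_p^{(m)}}^{(m)}]^T$, where $\hat\gamma_{pl}^{(m)}$ has $\hat R_{pl}^{(m)}$ levels and quantization regions $\{\hat I_{mpl}^{(r)}\}$. (i) Suppose the interior of $\boldsymbol{\Theta}\subset\mathbb{R}^{D_{\boldsymbol{\theta}}}$ is nonempty and every $q_j^{(\mathbf{s})}(\boldsymbol{\theta})$ is twice differentiable in $\boldsymbol{\theta}$ on $\boldsymbol{\Theta}$. Then for any $\boldsymbol{\theta}$, any quantization regions $\{\hat I_{mpl}^{(r)}\}$ and any statistical models $\{(\hat{\mathscr{X}}_p,\hat{\mathscr{F}}_p,\hat{\mathscr{P}}_p^{\boldsymbol{\theta}})\}$, if $$D_{\boldsymbol{\theta}} > \lambda_{\text{ISM}}\big(\{\mathcal{G}_p^{(m)}\},\{\hat R_{pl}^{(m)}\}\big) := \sum_{p=1}^P\sum_{m=1}^{M_p}\Big(\prod_{l=1}^{L_p^{(m)}}\hat R_{pl}^{(m)}-1\Big),$$ then the Fisher information matrix for estimating $\boldsymbol{\theta}$ is singular.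 (ii) Suppose the interior of $\boldsymbol{\Theta}$ is nonempty and every $q_j^{(\mathbf{s})}(\boldsymbol{\theta})$ is continuous in $\boldsymbol{\theta}$. Then for any $\{\hat I_{mpl}^{(r)}\}$ and any $\{(\hat{\mathscr{X}}_p,\hat{\mathscr{F}}_p,\hat{\mathscr{P}}_p^{\boldsymbol{\theta}})\}$, if the same inequality $D_{\boldsymbol{\theta}} > \lambda_{\text{ISM}}$ holds, the vector parameter space $\boldsymbol{\Theta}$ is not identifiable; moreover, every open subset $\mathcal{U}\subset\boldsymbol{\Theta}$ of $\mathbb{R}^{D_{\boldsymbol{\theta}}}$ contains infinitely many nonidentifiable vector parameter points.
   Context: System: $N$ sensors; sensor $j$ observes $\mathbf{x}_j$ with statistical model $(\mathscr{X}_j,\mathscr{F}_j,\mathscr{P}_j^{\boldsymbol{\theta}})$, the $\mathbf{x}_j$ independent across $j$, with unknown $\boldsymbol{\theta}\in\boldsymbol{\Theta}\subset\mathbb{R}^{D_{\boldsymbol{\theta}}}$. $\mathbf{x}_j$ is partitioned into $L_j$ subvectors $\mathbf{x}_{jl}$, each quantized by an $R_{jl}$-level vector quantizer $\gamma_{jl}(\mathbf{x}_{jl})=\sum_r r\,\mathbb{1}\{\mathbf{x}_{jl}\in I_{jl}^{(r)}\}$ with disjoint regions covering the domain; the superquantizer output $\mathbf{u}_j=\Gamma_j(\mathbf{x}_j)=[\gamma_{j1}(\mathbf{x}_{j1}),\dots,\gamma_{jL_j}(\mathbf{x}_{jL_j})]^T$ is sent error-free to a fusion center, which estimates $\boldsymbol{\theta}$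 from $\mathbf{u}=[\mathbf{u}_1^T,\dots,\mathbf{u}_N^T]^T$. Define $q_j^{(\mathbf{s})}(\boldsymbol{\theta})=\mathscr{P}_j^{\boldsymbol{\theta}}(\Gamma_j(\mathbf{x}_j)=\mathbf{s})$ for each possible outcome $\mathbf{s}$ of $\Gamma_j$; the Fisher information matrix is $\mathbf{J}(\boldsymbol{\theta})=\sum_j\sum_{\mathbf{s}}\frac{1}{q_j^{(\mathbf{s})}}\frac{\partial q_j^{(\mathbf{s})}}{\partial\boldsymbol{\theta}}\big[\frac{\partial q_j^{(\mathbf{s})}}{\partial\boldsymbol{\theta}}\big]^T$. Two distinct points $\boldsymbol{\theta},\boldsymbol{\theta}'$ are observationally equivalent if $\Pr(\mathbf{u}|\boldsymbol{\theta})=\Pr(\mathbf{u}|\boldsymbol{\theta}')$ for all $\mathbf{u}$; a point is identifiable if no other point of $\boldsymbol{\Theta}$ is observationally equivalent to it; $\boldsymbol{\Theta}$ is identifiable if every point is. Identical-models assumption: the statistical models of the observation vectors at some different sensors are known to be the same for all $\boldsymbol{\theta}$, so there are only $P<N$ distinct models. Hence for $j,j'\in\mathcal{G}_p^{(m)}$, $q_j^{(\mathbf{s})}(\boldsymbol{\theta})=q_{j'}^{(\mathbf{s})}(\boldsymbol{\theta})$. *)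

theory Defs
  imports "HOL-Probability.Probability"
begin

text \<open>Superquantizer of subgroup (p,m): component l applies the R(p,m,l)-level
quantizer gam p m l to the l-th subvector sub p m l x of the observation x.\<close>
definition superq ::
  "(nat \<Rightarrow> nat \<Rightarrow> nat \<Rightarrow> 'x \<Rightarrow> 'y) \<Rightarrow> (nat \<Rightarrow> nat \<Rightarrow> nat \<Rightarrow> 'y \<Rightarrow> nat)
   \<Rightarrow> (nat \<Rightarrow> nat \<Rightarrow> nat) \<Rightarrow> nat \<Rightarrow> nat \<Rightarrow> 'x \<Rightarrow> nat list" where
  "superq sub gam L p m x = map (\<lambda>l. gam p m l (sub p m l x)) [0..<L p m]"

definition outcomes :: "(nat \<Rightarrow> nat \<Rightarrow> nat \<Rightarrow> nat) \<Rightarrow> (nat \<Rightarrow> nat \<Rightarrow> nat) \<Rightarrow> nat \<Rightarrow> nat \<Rightarrow> nat list set" where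
  "outcomes R L p m = {s. length s = L p m \<and> (\<forall>l<L p m. s ! l \<in> {1..R p m l})}"

text \<open>q_j^{(s)}(theta) for a sensor j belonging to subgroup grp j = (p,m):
the probability, under the model of group p, that the superquantizer outputs s.\<close>
definition qsens ::
  "(nat \<Rightarrow> 'd \<Rightarrow> 'x measure) \<Rightarrow> (nat \<Rightarrow> nat \<Rightarrow> nat \<Rightarrow> 'x \<Rightarrow> 'y) \<Rightarrow> (nat \<Rightarrow> nat \<Rightarrow> nat \<Rightarrow> 'y \<Rightarrow> nat)
   \<Rightarrow> (nat \<Rightarrow> nat \<Rightarrow> nat) \<Rightarrow> (nat \<Rightarrow> nat \<times> nat) \<Rightarrow> nat \<Rightarrow> nat list \<Rightarrow> 'd \<Rightarrow> real" where
  "qsens Pth sub gam L grp j s th =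
     measure (Pth (fst (grp j)) th)
       {x \<in> space (Pth (fst (grp j)) th). superq sub gam L (fst (grp j)) (snd (grp j)) x = s}"

text \<open>Pr(u | theta): the sensors' observations are independent (product measure),
sensor j having the model of its group; u j is the superquantizer output of sensor j.\<close>
definition pr_u ::
  "nat \<Rightarrow> (nat \<Rightarrow> 'd \<Rightarrow> 'x measure) \<Rightarrow> (nat \<Rightarrow> nat \<Rightarrow> nat \<Rightarrow> 'x \<Rightarrow> 'y) \<Rightarrow> (nat \<Rightarrow> nat \<Rightarrow> nat \<Rightarrow> 'y \<Rightarrow> nat)
   \<Rightarrow> (nat \<Rightarrow> nat \<Rightarrow> nat) \<Rightarrow> (nat \<Rightarrow> nat \<times> nat) \<Rightarrow> (nat \<Rightarrow> nat list) \<Rightarrow> 'd \<Rightarrow> real" where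
  "pr_u N Pth sub gam L grp u th =
     (let Q = PiM {..<N} (\<lambda>j. Pth (fst (grp j)) th) in
      measure Q {x \<in> space Q. \<forall>j<N. superq sub gam L (fst (grp j)) (snd (grp j)) (x j) = u j})"

definition obs_equiv ::
  "nat \<Rightarrow> (nat \<Rightarrow> 'd \<Rightarrow> 'x measure) \<Rightarrow> (nat \<Rightarrow> nat \<Rightarrow> nat \<Rightarrow> 'x \<Rightarrow> 'y) \<Rightarrow> (nat \<Rightarrow> nat \<Rightarrow> nat \<Rightarrow> 'y \<Rightarrow> nat)
   \<Rightarrow> (nat \<Rightarrow> nat \<Rightarrow> nat) \<Rightarrow> (nat \<Rightarrow> nat \<times> nat) \<Rightarrow> 'd \<Rightarrow> 'd \<Rightarrow> bool" where
  "obs_equiv N Pth sub gam L grp th th' \<longleftrightarrow>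
     th \<noteq> th' \<and> (\<forall>u. pr_u N Pth sub gam L grp u th = pr_u N Pth sub gam L grp u th')"

definition identifiable_point ::
  "'d set \<Rightarrow> nat \<Rightarrow> (nat \<Rightarrow> 'd \<Rightarrow> 'x measure) \<Rightarrow> (nat \<Rightarrow> nat \<Rightarrow> nat \<Rightarrow> 'x \<Rightarrow> 'y) \<Rightarrow> (nat \<Rightarrow> nat \<Rightarrow> nat \<Rightarrow> 'y \<Rightarrow> nat)
   \<Rightarrow> (nat \<Rightarrow> nat \<Rightarrow> nat) \<Rightarrow> (nat \<Rightarrow> nat \<times> nat) \<Rightarrow> 'd \<Rightarrow> bool" where
  "identifiable_point Th N Pth sub gam L grp th \<longleftrightarrow>
     (\<forall>th'\<in>Th. \<not> obs_equiv N Pth sub gam L grp th th')"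

definition identifiable_space ::
  "'d set \<Rightarrow> nat \<Rightarrow> (nat \<Rightarrow> 'd \<Rightarrow> 'x measure) \<Rightarrow> (nat \<Rightarrow> nat \<Rightarrow> nat \<Rightarrow> 'x \<Rightarrow> 'y) \<Rightarrow> (nat \<Rightarrow> nat \<Rightarrow> nat \<Rightarrow> 'y \<Rightarrow> nat)
   \<Rightarrow> (nat \<Rightarrow> nat \<Rightarrow> nat) \<Rightarrow> (nat \<Rightarrow> nat \<times> nat) \<Rightarrow> bool" where
  "identifiable_space Th N Pth sub gam L grp \<longleftrightarrow>
     (\<forall>th\<in>Th. identifiable_point Th N Pth sub gam L grp th)"

text \<open>Fisher information matrix J(theta) = sum_j sum_s (1/q) grad q (grad q)^T,
where G j s is the gradient of q_j^{(s)} at theta. (Convention 1/0 = 0.)\<close>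
definition fisher_info ::
  "nat \<Rightarrow> (nat \<Rightarrow> nat list set) \<Rightarrow> (nat \<Rightarrow> nat list \<Rightarrow> real^'n \<Rightarrow> real)
   \<Rightarrow> (nat \<Rightarrow> nat list \<Rightarrow> real^'n) \<Rightarrow> real^'n \<Rightarrow> real^'n^'n" where
  "fisher_info N outs q G th =
     (\<Sum>j<N. \<Sum>s\<in>outs j. (1 / q j s th) *\<^sub>R (\<chi> a b. (G j s) $ a * (G j s) $ b))"

definition lambda_ISM :: "nat \<Rightarrow> (nat \<Rightarrow> nat) \<Rightarrow> (nat \<Rightarrow> nat \<Rightarrow> nat) \<Rightarrow> (nat \<Rightarrow> nat \<Rightarrow> nat \<Rightarrow> nat) \<Rightarrow> int" where
  "lambda_ISM P M L R = (\<Sum>p<P. \<Sum>m<M p. (int (\<Prod>l<L p m. R p m l) - 1))"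

end

theory Submission
  imports Defs "HOL-Homology.Invariance_of_Domain"
begin



definition Qf where
  "Qf Pth sub gam L p m s th = measure (Pth p th) {x \<in> space (Pth p th). superq sub gam L p m x = s}"

lemma qsens_Qf: "qsens Pth sub gam L grp j s th = Qf Pth sub gam L (fst (grp j)) (snd (grp j)) s th"
  by (simp add: qsens_def Qf_def)

lemma superq_eq: "superq sub gam L p m x = s \<longleftrightarrow> length s = L p m \<and> (\<forall>l<L p m. gam p m l (sub p m l x) = s!l)"
  unfolding superq_def by (auto simp: list_eq_iff_nth_eq)

lemma ev_sets:
  assumes se: "sets Mp = sets Xp"
    and sm: "\<forall>l<L p m. sub p m l \<in> measurable Xp (Y l)"
    and gm: "\<forall>l<L p m. gam p m l \<in> measurable (Y l) (count_space UNIV)"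
  shows "{x\<in>space Mp. superq sub gam L p m x = s} \<in> sets Mp"
proof -
  have f: "(\<lambda>x. gam p m l (sub p m l x)) \<in> measurable Mp (count_space UNIV)" if "l < L p m" for l
    using measurable_comp[OF sm[rule_format, OF that] gm[rule_format, OF that]] se
    by (simp add: o_def measurable_cong_sets[OF se refl])
  show ?thesis
  proof (cases "length s = L p m")
    case True
    have "{x\<in>space Mp. \<forall>l\<in>{..<L p m}. gam p m l (sub p m l x) = s!l} \<in> sets Mp"
    proof (rule sets.sets_Collect_finite_All)
      fix l assume "l \<in> {..<L p m}"
      then have l: "l < L p m" by simp
      have "{x \<in> space Mp. gam p m l (sub p m l x) = s ! l} = (\<lambda>x. gam p m l (sub p m l x)) -` {s!l} \<inter> space Mp"
        by blast
      also have "\<dots> \<in> sets Mp" using f[OF l] by (rule measurable_sets) simp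
      finally show "{x \<in> space Mp. gam p m l (sub p m l x) = s ! l} \<in> sets Mp" .
    qed simp
    moreover have "{x\<in>space Mp. superq sub gam L p m x = s} = {x\<in>space Mp. \<forall>l\<in>{..<L p m}. gam p m l (sub p m l x) = s!l}"
      using True unfolding superq_eq by blast
    ultimately show ?thesis by simp
  next
    case False
    then have "{x\<in>space Mp. superq sub gam L p m x = s} = {}" unfolding superq_eq by blast
    then show ?thesis by (metis sets.empty_sets)
  qed
qed

lemma outcomes_finite: "finite (outcomes R L p m)"
proof -
  have "outcomes R L p m \<subseteq> {xs. set xs \<subseteq> {0..(\<Sum>l<L p m. R p m l)} \<and> length xs = L p m}"
  proof
    fix s assume s: "s \<in> outcomes R L p m"
    have "set s \<subseteq> {0..(\<Sum>l<L p m. R p m l)}"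
    proof
      fix x assume "x \<in> set s"
      then obtain l where l: "l < length s" "s!l = x" by (auto simp: in_set_conv_nth)
      then have "x \<le> R p m l" using s by (auto simp: outcomes_def)
      also have "\<dots> \<le> (\<Sum>l<L p m. R p m l)"
        using l s by (intro member_le_sum) (auto simp: outcomes_def)
      finally show "x \<in> {0..(\<Sum>l<L p m. R p m l)}" by simp
    qed
    then show "s \<in> {xs. set xs \<subseteq> {0..(\<Sum>l<L p m. R p m l)} \<and> length xs = L p m}"
      using s by (auto simp: outcomes_def)
  qed
  moreover have "finite {xs. set xs \<subseteq> {0..(\<Sum>l<L p m. R p m l)} \<and> length xs = L p m}"
    by (rule finite_lists_length_eq) simp
  ultimately show ?thesis by (rule finite_subset)
qed

lemma superq_in_outcomes:
  assumes se: "sets Mp = sets Xp"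
    and sm: "\<forall>l<L p m. sub p m l \<in> measurable Xp (Y l)"
    and lev: "\<forall>l<L p m. \<forall>y\<in>space (Y l). gam p m l y \<in> {1..R p m l}"
    and x: "x \<in> space Mp"
  shows "superq sub gam L p m x \<in> outcomes R L p m"
proof -
  have sp: "space Mp = space Xp" using se by (rule sets_eq_imp_space_eq)
  have "gam p m l (sub p m l x) \<in> {1..R p m l}" if "l < L p m" for l
    using lev sm that x sp by (metis measurable_space)
  then show ?thesis by (simp add: outcomes_def superq_def)
qed

lemma Qf_props:
  assumes ps: "prob_space (Pth p th)" and se: "sets (Pth p th) = sets Xp"
    and sm: "\<forall>l<L p m. sub p m l \<in> measurable Xp (Y l)"
    and gm: "\<forall>l<L p m. gam p m l \<in> measurable (Y l) (count_space UNIV)"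
    and lev: "\<forall>l<L p m. \<forall>y\<in>space (Y l). gam p m l y \<in> {1..R p m l}"
  shows "(\<Sum>s\<in>outcomes R L p m. Qf Pth sub gam L p m s th) = 1"
    and "\<And>s. s \<notin> outcomes R L p m \<Longrightarrow> Qf Pth sub gam L p m s th = 0"
    and "outcomes R L p m \<noteq> {}"
proof -
  define E where "E s = {x\<in>space (Pth p th). superq sub gam L p m x = s}" for s
  have Es: "E s \<in> sets (Pth p th)" for s unfolding E_def by (rule ev_sets[where Mp="Pth p th" and Xp=Xp and L=L and p=p and m=m and sub=sub and Y=Y and gam=gam, OF se sm gm])
  have inout: "superq sub gam L p m x \<in> outcomes R L p m" if "x \<in> space (Pth p th)" for x
    by (rule superq_in_outcomes[where Mp="Pth p th" and Xp=Xp and L=L and p=p and m=m and sub=sub and Y=Y and gam=gam and R=R, OF se sm lev that])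
  interpret prob_space "Pth p th" by (rule ps)
  have "space (Pth p th) = (\<Union>s\<in>outcomes R L p m. E s)"
    using inout unfolding E_def by blast
  then have "1 = measure (Pth p th) (\<Union>s\<in>outcomes R L p m. E s)" using prob_space by simp
  also have "\<dots> = (\<Sum>s\<in>outcomes R L p m. measure (Pth p th) (E s))"
    by (rule finite_measure_finite_Union) (use Es outcomes_finite in \<open>auto simp: disjoint_family_on_def E_def\<close>)
  finally show "(\<Sum>s\<in>outcomes R L p m. Qf Pth sub gam L p m s th) = 1"
    by (simp add: Qf_def E_def)
  show "Qf Pth sub gam L p m s th = 0" if "s \<notin> outcomes R L p m" for s
  proof -
    have eq: "{x\<in>space (Pth p th). superq sub gam L p m x = s} = {}" using inout that by blast
    show ?thesis unfolding Qf_def by (rule ssubst[OF eq]) simp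
  qed
  obtain x where "x \<in> space (Pth p th)" using not_empty by blast
  then show "outcomes R L p m \<noteq> {}" using inout by blast
qed



lemma pr_u_eq:
  assumes ps: "\<And>j. j < N \<Longrightarrow> prob_space (Pth (fst (grp j)) th)"
    and Es: "\<And>j s. j < N \<Longrightarrow> {x\<in>space (Pth (fst (grp j)) th). superq sub gam L (fst (grp j)) (snd (grp j)) x = s} \<in> sets (Pth (fst (grp j)) th)"
  shows "pr_u N Pth sub gam L grp u th = enn2real (\<Prod>j<N. ennreal (qsens Pth sub gam L grp j (u j) th))"
proof -
  define M where "M j = Pth (fst (grp j)) th" for j
  define E where "E j = {x\<in>space (M j). superq sub gam L (fst (grp j)) (snd (grp j)) x = u j}" for j
  have set_eq: "{x \<in> space (PiM {..<N} M). \<forall>j<N. superq sub gam L (fst (grp j)) (snd (grp j)) (x j) = u j}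
      = PiE {..<N} E"
    unfolding space_PiM E_def PiE_def Pi_def by blast
  have "emeasure (PiM {..<N} M) (prod_emb {..<N} M {..<N} (PiE {..<N} E)) = (\<Prod>j\<in>{..<N}. emeasure (M j) (E j))"
    by (rule emeasure_PiM_emb) (use ps Es in \<open>auto simp: M_def E_def\<close>)
  moreover have "prod_emb {..<N} M {..<N} (PiE {..<N} E) = PiE {..<N} E"
    by (rule prod_emb_PiE_same_index) (auto simp: E_def)
  moreover have "emeasure (M j) (E j) = ennreal (qsens Pth sub gam L grp j (u j) th)" if "j < N" for j
  proof -
    interpret prob_space "M j" using ps[OF that] by (simp add: M_def)
    have "emeasure (M j) (E j) = ennreal (measure (M j) (E j))" by (rule emeasure_eq_measure)
    then show ?thesis unfolding qsens_def M_def E_def .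
  qed
  ultimately have "emeasure (PiM {..<N} M) (PiE {..<N} E) = (\<Prod>j<N. ennreal (qsens Pth sub gam L grp j (u j) th))"
    by (metis (no_types, lifting) prod.cong lessThan_iff)
  moreover have "pr_u N Pth sub gam L grp u th = measure (PiM {..<N} M) (PiE {..<N} E)"
    unfolding set_eq[symmetric] unfolding pr_u_def Let_def M_def by (rule refl)
  ultimately show ?thesis by (simp add: measure_def)
qed



lemma fisher_mulv_zero:
  fixes G :: "nat \<Rightarrow> nat list \<Rightarrow> real^'n"
  assumes "\<forall>j<N. \<forall>s\<in>outs j. G j s \<bullet> v = 0"
  shows "fisher_info N outs q G th *v v = 0"
proof -
  have "(fisher_info N outs q G th *v v) $ i = 0" for i
  proof -
    have "(fisher_info N outs q G th *v v) $ i
        = (\<Sum>k\<in>UNIV. (\<Sum>j<N. \<Sum>s\<in>outs j. (1 / q j s th) * ((G j s) $ i * (G j s) $ k)) * v $ k)"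
      by (simp add: matrix_vector_mult_def fisher_info_def)
    also have "\<dots> = (\<Sum>j<N. \<Sum>s\<in>outs j. (1 / q j s th) * (G j s) $ i * (\<Sum>k\<in>UNIV. (G j s) $ k * v $ k))"
      by (simp add: sum_distrib_left sum_distrib_right sum.swap[of _ UNIV] mult.assoc mult.left_commute)
    also have "\<dots> = (\<Sum>j<N. \<Sum>s\<in>outs j. (1 / q j s th) * (G j s) $ i * (G j s \<bullet> v))"
      by (simp add: inner_vec_def)
    also have "\<dots> = 0" using assms by simp
    finally show ?thesis .
  qed
  then show ?thesis by (simp add: vec_eq_iff)
qed

lemma not_invertible_kernel:
  fixes A :: "real^'n^'n"
  assumes "A *v v = 0" "v \<noteq> 0"
  shows "\<not> invertible A"
proof
  assume "invertible A"
  then obtain B where "B ** A = mat 1" by (auto simp: invertible_def)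
  then have "v = B *v (A *v v)" by (simp add: matrix_vector_mul_assoc)
  with assms show False by simp
qed

lemma inner_fun_eq:
  fixes a b :: "'a::real_inner"
  assumes "(\<lambda>h. a \<bullet> h) = (\<lambda>h. b \<bullet> h)"
  shows "a = b"
proof -
  have "(a - b) \<bullet> (a - b) = 0" using fun_cong[OF assms, of "a - b"] by (simp add: inner_diff_left)
  then show ?thesis by simp
qed

lemma deriv_sum_zero:
  fixes G :: "'s \<Rightarrow> 'a::real_inner" and f :: "'s \<Rightarrow> 'a \<Rightarrow> real"
  assumes th: "th \<in> interior Th" and fin: "finite Os"
    and d: "\<And>s. s \<in> Os \<Longrightarrow> ((\<lambda>t. f s t) has_derivative (\<lambda>h. G s \<bullet> h)) (at th)"
    and one: "\<And>t. t \<in> Th \<Longrightarrow> (\<Sum>s\<in>Os. f s t) = 1"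
  shows "(\<Sum>s\<in>Os. G s) = 0"
proof -
  have "((\<lambda>t. \<Sum>s\<in>Os. f s t) has_derivative (\<lambda>h. \<Sum>s\<in>Os. G s \<bullet> h)) (at th)"
    by (rule has_derivative_sum) (use d in auto)
  then have "((\<lambda>t. \<Sum>s\<in>Os. f s t) has_derivative (\<lambda>h. (\<Sum>s\<in>Os. G s) \<bullet> h)) (at th)"
    by (simp add: inner_sum_left)
  moreover have "((\<lambda>t. \<Sum>s\<in>Os. f s t) has_derivative (\<lambda>h. 0 \<bullet> h)) (at th)"
  proof (rule has_derivative_transform_within_open[OF _ open_interior th])
    show "((\<lambda>t. 1::real) has_derivative (\<lambda>h. 0 \<bullet> h)) (at th within UNIV)" by simp
    show "\<And>x. x \<in> interior Th \<Longrightarrow> 1 = (\<Sum>s\<in>Os. f s x)" using one interior_subset by (metis subsetD)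
  qed
  ultimately show ?thesis using has_derivative_unique inner_fun_eq by metis
qed

lemma no_inj:
  fixes F :: "'i \<Rightarrow> real^'d \<Rightarrow> real"
  assumes fin: "finite I" and card: "card I < CARD('d)"
    and V: "open V" "V \<noteq> {}"
    and cont: "\<And>i. i \<in> I \<Longrightarrow> continuous_on V (F i)"
  shows "\<exists>x\<in>V. \<exists>y\<in>V. x \<noteq> y \<and> (\<forall>i\<in>I. F i x = F i y)"
proof -
  have fU: "finite (UNIV::'d set)" by simp
  obtain \<iota> :: "'i \<Rightarrow> 'd" where inj: "inj_on \<iota> I"
    using card_le_inj[OF fin fU] card by auto
  define B where "B = (\<lambda>i. axis (\<iota> i) (1::real)) ` I"
  define f where "f x = (\<Sum>i\<in>I. F i x *\<^sub>R axis (\<iota> i) (1::real))" for x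
  have comp: "f x $ \<iota> i = F i x" if "i \<in> I" for x i
  proof -
    have "f x $ \<iota> i = (\<Sum>i'\<in>I. F i' x * (if i' = i then 1 else 0))"
      unfolding f_def sum_component using inj that
      by (intro sum.cong) (auto simp: axis_def inj_on_def)
    also have "\<dots> = F i x" using fin that by (simp add: sum.delta' if_distrib cong: if_cong)
    finally show ?thesis .
  qed
  have "\<not> inj_on f V"
  proof
    assume injf: "inj_on f V"
    have "dim (UNIV :: (real^'d) set) \<le> dim (span B)"
    proof (rule invariance_of_dimension_subspaces[of UNIV V "span B" f])
      show "openin (top_of_set UNIV) V" using V by simp
      show "continuous_on V f" unfolding f_def
        by (intro continuous_on_sum continuous_on_scaleR cont continuous_on_const)
      show "f ` V \<subseteq> span B" unfolding f_def B_def
        by (intro image_subsetI span_sum span_scale) (auto intro: span_base)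
    qed (use injf V in auto)
    also have "\<dots> \<le> card B" using fin by (simp add: B_def dim_le_card')
    also have "\<dots> \<le> card I" unfolding B_def by (rule card_image_le[OF fin])
    finally show False using card by simp
  qed
  then obtain x y where "x \<in> V" "y \<in> V" "x \<noteq> y" "f x = f y" by (auto simp: inj_on_def)
  then show ?thesis using comp by metis
qed



lemma card_lists_nth:
  assumes "\<And>l. finite (A l)"
  shows "card {s. length s = n \<and> (\<forall>l<n. s!l \<in> A l)} = (\<Prod>l<n. card (A l))"
proof (induction n)
  case 0
  have "{s. length s = 0 \<and> (\<forall>l<0. s!l \<in> A l)} = {[]}" by auto
  then show ?case by simp
next
  case (Suc n)
  define T where "T k = {s. length s = k \<and> (\<forall>l<k. s!l \<in> A l)}" for k
  have eq: "T (Suc n) = (\<lambda>(xs, x). xs @ [x]) ` (T n \<times> A n)"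
  proof
    show "T (Suc n) \<subseteq> (\<lambda>(xs, x). xs @ [x]) ` (T n \<times> A n)"
    proof
      fix s assume s: "s \<in> T (Suc n)"
      then have "s = take n s @ [s!n]" unfolding T_def
        by (metis (mono_tags, lifting) lessI mem_Collect_eq take_Suc_conv_app_nth take_all order_refl)
      moreover have "(take n s, s!n) \<in> T n \<times> A n" using s unfolding T_def by auto
      ultimately show "s \<in> (\<lambda>(xs, x). xs @ [x]) ` (T n \<times> A n)" by (metis (no_types, lifting) case_prod_conv image_eqI)
    qed
    show "(\<lambda>(xs, x). xs @ [x]) ` (T n \<times> A n) \<subseteq> T (Suc n)"
      unfolding T_def by (auto simp: nth_append less_Suc_eq)
  qed
  have inj: "inj_on (\<lambda>(xs, x). xs @ [x]) (T n \<times> A n)"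
    by (auto simp: inj_on_def)
  have "card (T (Suc n)) = card (T n \<times> A n)" unfolding eq by (rule card_image[OF inj])
  also have "\<dots> = card (T n) * card (A n)" by (rule card_cartesian_product)
  finally show ?case using Suc by (simp add: T_def)
qed

lemma card_outcomes: "card (outcomes R L p m) = (\<Prod>l<L p m. R p m l)"
  unfolding outcomes_def using card_lists_nth[of "\<lambda>l. {1..R p m l}" "L p m"] by simp



theorem theorem3:
  fixes Th :: "(real^'d) set"
    and N P :: nat
    and grp :: "nat \<Rightarrow> nat \<times> nat"
    and M :: "nat \<Rightarrow> nat"
    and L :: "nat \<Rightarrow> nat \<Rightarrow> nat"
    and R :: "nat \<Rightarrow> nat \<Rightarrow> nat \<Rightarrow> nat"
    and X :: "nat \<Rightarrow> 'x measure"
    and Pth :: "nat \<Rightarrow> real^'d \<Rightarrow> 'x measure"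
    and Y :: "nat \<Rightarrow> nat \<Rightarrow> nat \<Rightarrow> 'y measure"
    and sub :: "nat \<Rightarrow> nat \<Rightarrow> nat \<Rightarrow> 'x \<Rightarrow> 'y"
    and gam :: "nat \<Rightarrow> nat \<Rightarrow> nat \<Rightarrow> 'y \<Rightarrow> nat"
  assumes PN: "P < N"
    and grp_range: "\<forall>j<N. fst (grp j) < P \<and> snd (grp j) < M (fst (grp j))"
    and M_pos: "\<forall>p<P. 0 < M p"
    and subgroups_nonempty: "\<forall>p<P. \<forall>m<M p. \<exists>j<N. grp j = (p, m)"
    and models: "\<forall>p<P. \<forall>th\<in>Th. prob_space (Pth p th) \<and> sets (Pth p th) = sets (X p)"
    and sub_meas: "\<forall>p<P. \<forall>m<M p. \<forall>l<L p m. sub p m l \<in> measurable (X p) (Y p m l)"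
    and gam_meas: "\<forall>p<P. \<forall>m<M p. \<forall>l<L p m. gam p m l \<in> measurable (Y p m l) (count_space UNIV)"
    and gam_levels: "\<forall>p<P. \<forall>m<M p. \<forall>l<L p m. \<forall>y\<in>space (Y p m l). gam p m l y \<in> {1..R p m l}"
    and int_ne: "interior Th \<noteq> {}"
    and dim: "int CARD('d) > lambda_ISM P M L R"
  shows
    "((\<forall>j<N. \<forall>s\<in>outcomes R L (fst (grp j)) (snd (grp j)).
         \<exists>g. (\<forall>th\<in>Th. ((\<lambda>t. qsens Pth sub gam L grp j s t) has_derivative (\<lambda>h. g th \<bullet> h)) (at th within Th))
            \<and> (\<forall>th\<in>Th. g differentiable (at th within Th)))
      \<longrightarrow> (\<forall>th\<in>interior Th. \<forall>G.
             (\<forall>j<N. \<forall>s\<in>outcomes R L (fst (grp j)) (snd (grp j)).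
                ((\<lambda>t. qsens Pth sub gam L grp j s t) has_derivative (\<lambda>h. G j s \<bullet> h)) (at th))
             \<longrightarrow> \<not> invertible (fisher_info N (\<lambda>j. outcomes R L (fst (grp j)) (snd (grp j)))
                                   (qsens Pth sub gam L grp) G th)))
     \<and>
     ((\<forall>j<N. \<forall>s\<in>outcomes R L (fst (grp j)) (snd (grp j)).
         continuous_on Th (\<lambda>t. qsens Pth sub gam L grp j s t))
      \<longrightarrow> \<not> identifiable_space Th N Pth sub gam L grp
          \<and> (\<forall>U. open U \<and> U \<noteq> {} \<and> U \<subseteq> Th \<longrightarrow>
                 infinite {th\<in>U. \<not> identifiable_point Th N Pth sub gam L grp th}))"
proof -
  define q where "q = qsens Pth sub gam L grp"
  have N0: "0 < N" using PN by simp
  obtain th0 where th0: "th0 \<in> interior Th" using int_ne by blast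
  have Th_ne: "th0 \<in> Th" using th0 interior_subset by blast
  have QP: "(\<Sum>s\<in>outcomes R L p m. Qf Pth sub gam L p m s th) = 1"
    "\<And>s. s \<notin> outcomes R L p m \<Longrightarrow> Qf Pth sub gam L p m s th = 0"
    "outcomes R L p m \<noteq> {}"
    if "p < P" "m < M p" "th \<in> Th" for p m th
    using Qf_props[where Pth=Pth and p=p and th=th and Xp="X p" and L=L and m=m and sub=sub and Y="Y p m" and gam=gam and R=R]
      models sub_meas gam_meas gam_levels that by blast+
  have Es: "{x\<in>space (Pth p th). superq sub gam L p m x = s} \<in> sets (Pth p th)"
    if "p < P" "m < M p" "th \<in> Th" for p m th s
    using ev_sets[where Mp="Pth p th" and Xp="X p" and L=L and p=p and m=m and sub=sub and Y="Y p m" and gam=gam]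
      models sub_meas gam_meas that by blast
  define s0 where "s0 p m = (SOME s. s \<in> outcomes R L p m)" for p m
  have s0: "s0 p m \<in> outcomes R L p m" if "p < P" "m < M p" for p m
    using QP(3)[OF that Th_ne] unfolding s0_def by (metis ex_in_conv someI_ex)
  define rep where "rep p m = (SOME j. j < N \<and> grp j = (p, m))" for p m
  have rep: "rep p m < N \<and> grp (rep p m) = (p, m)" if "p < P" "m < M p" for p m
    using subgroups_nonempty that unfolding rep_def by (metis (mono_tags, lifting) someI_ex)
  define I where "I = {(p, m, s). p < P \<and> m < M p \<and> s \<in> outcomes R L p m - {s0 p m}}"
  have I_eq: "I = (\<Union>p<P. \<Union>m<M p. (\<lambda>s. (p, m, s)) ` (outcomes R L p m - {s0 p m}))"
    unfolding I_def by auto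
  have finI: "finite I" unfolding I_eq using outcomes_finite by auto
  have "card I \<le> (\<Sum>p<P. card (\<Union>m<M p. (\<lambda>s. (p, m, s)) ` (outcomes R L p m - {s0 p m})))"
    unfolding I_eq by (rule card_UN_le) simp
  also have "\<dots> \<le> (\<Sum>p<P. \<Sum>m<M p. card ((\<lambda>s. (p, m, s)) ` (outcomes R L p m - {s0 p m})))"
    by (intro sum_mono card_UN_le) simp
  also have "\<dots> \<le> (\<Sum>p<P. \<Sum>m<M p. card (outcomes R L p m - {s0 p m}))"
    by (intro sum_mono card_image_le) (simp add: outcomes_finite)
  finally have cI0: "card I \<le> (\<Sum>p<P. \<Sum>m<M p. card (outcomes R L p m - {s0 p m}))" .
  then have "int (card I) \<le> int (\<Sum>p<P. \<Sum>m<M p. card (outcomes R L p m - {s0 p m}))"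
    by (simp only: of_nat_le_iff)
  also have "\<dots> = (\<Sum>p<P. \<Sum>m<M p. int (card (outcomes R L p m - {s0 p m})))"
    by (simp only: of_nat_sum)
  also have "\<dots> = lambda_ISM P M L R"
    unfolding lambda_ISM_def
  proof (intro sum.cong refl)
    fix p m assume "p \<in> {..<P}" "m \<in> {..<M p}"
    then have s0in: "s0 p m \<in> outcomes R L p m" using s0 by simp
    have c1: "card (outcomes R L p m - {s0 p m}) = card (outcomes R L p m) - 1"
      using s0in by (simp add: outcomes_finite)
    have "card (outcomes R L p m) \<noteq> 0" using s0in outcomes_finite by auto
    then have "int (card (outcomes R L p m) - 1) = int (card (outcomes R L p m)) - 1" by simp
    then show "int (card (outcomes R L p m - {s0 p m})) = int (\<Prod>l<L p m. R p m l) - 1"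
      using c1 card_outcomes by simp
  qed
  finally have cardI: "card I < CARD('d)" using dim by linarith
  have qQ: "q j s t = Qf Pth sub gam L (fst (grp j)) (snd (grp j)) s t" for j s t
    unfolding q_def by (rule qsens_Qf)
  have qsum: "(\<Sum>s\<in>outcomes R L (fst (grp j)) (snd (grp j)). q j s t) = 1" if "j < N" "t \<in> Th" for j t
    using QP(1)[of "fst (grp j)" "snd (grp j)" t] grp_range that by (simp add: qQ)
  show ?thesis
  proof (intro conjI impI)
    show "\<forall>th\<in>interior Th. \<forall>G. (\<forall>j<N. \<forall>s\<in>outcomes R L (fst (grp j)) (snd (grp j)).
                ((\<lambda>t. qsens Pth sub gam L grp j s t) has_derivative (\<lambda>h. G j s \<bullet> h)) (at th))
             \<longrightarrow> \<not> invertible (fisher_info N (\<lambda>j. outcomes R L (fst (grp j)) (snd (grp j)))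
                                   (qsens Pth sub gam L grp) G th)"
    proof (intro ballI allI impI)
      fix th G
      assume th: "th \<in> interior Th"
        and D: "\<forall>j<N. \<forall>s\<in>outcomes R L (fst (grp j)) (snd (grp j)).
                ((\<lambda>t. qsens Pth sub gam L grp j s t) has_derivative (\<lambda>h. G j s \<bullet> h)) (at th)"
      have thT: "th \<in> Th" using th interior_subset by blast
      have Gsum: "(\<Sum>s\<in>outcomes R L (fst (grp j)) (snd (grp j)). G j s) = 0" if "j < N" for j
        by (rule deriv_sum_zero[OF th outcomes_finite, where f="q j"])
           (use D that qsum in \<open>auto simp: q_def\<close>)
      have Guniq: "G j s = G j' s" if "j < N" "j' < N" "grp j = grp j'"
          "s \<in> outcomes R L (fst (grp j)) (snd (grp j))" for j j' s
      proof -
        have "(\<lambda>t. q j s t) = (\<lambda>t. q j' s t)" using that by (simp add: qQ)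
        then have "((\<lambda>t. q j s t) has_derivative (\<lambda>h. G j' s \<bullet> h)) (at th)"
          using D that by (simp add: q_def)
        moreover have "((\<lambda>t. q j s t) has_derivative (\<lambda>h. G j s \<bullet> h)) (at th)"
          using D that by (simp add: q_def)
        ultimately show ?thesis using has_derivative_unique inner_fun_eq by metis
      qed
      define S where "S = (\<lambda>(p, m, s). G (rep p m) s) ` I"
      have finS: "finite S" unfolding S_def using finI by simp
      have "dim S \<le> card S" by (rule dim_le_card'[OF finS])
      also have "\<dots> \<le> card I" unfolding S_def by (rule card_image_le[OF finI])
      finally have dimS: "dim S < DIM(real^'d)" using cardI by simp
      have inspan: "G j s \<in> span S" if j: "j < N" and s: "s \<in> outcomes R L (fst (grp j)) (snd (grp j))" for j s
      proof -
        define p where "p = fst (grp j)"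
        define m where "m = snd (grp j)"
        have pm: "p < P" "m < M p" using grp_range j by (auto simp: p_def m_def)
        have grpj: "grp j = (p, m)" by (simp add: p_def m_def)
        have r: "rep p m < N" "grp (rep p m) = grp j" using rep[OF pm] grpj by auto
        have Gr: "G j s' = G (rep p m) s'" if "s' \<in> outcomes R L p m" for s'
          using Guniq[OF j r(1) r(2)[symmetric]] that by (simp add: p_def m_def)
        have inS: "G j s' \<in> span S" if "s' \<in> outcomes R L p m" "s' \<noteq> s0 p m" for s'
        proof -
          have "(p, m, s') \<in> I" using that pm by (simp add: I_def)
          then have "G (rep p m) s' \<in> S" unfolding S_def by force
          then show ?thesis using Gr[OF that(1)] by (simp add: span_base)
        qed
        show ?thesis
        proof (cases "s = s0 p m")
          case False then show ?thesis using inS s by (simp add: p_def m_def)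
        next
          case True
          have "0 = (\<Sum>s'\<in>outcomes R L p m. G j s')" using Gsum[OF j] by (simp add: p_def m_def)
          also have "\<dots> = G j s + (\<Sum>s'\<in>outcomes R L p m - {s}. G j s')"
            using s outcomes_finite by (simp add: sum.remove p_def m_def)
          finally have "G j s = - (\<Sum>s'\<in>outcomes R L p m - {s}. G j s')" by (simp add: eq_neg_iff_add_eq_0)
          moreover have "(\<Sum>s'\<in>outcomes R L p m - {s}. G j s') \<in> span S"
            using inS True by (intro span_sum) auto
          ultimately show ?thesis by (simp add: span_neg)
        qed
      qed
      obtain v :: "real^'d" where v: "v \<noteq> 0" "\<And>y. y \<in> span S \<Longrightarrow> orthogonal v y"
        using orthogonal_to_subspace_exists[OF dimS] by blast
      have "\<forall>j<N. \<forall>s\<in>outcomes R L (fst (grp j)) (snd (grp j)). G j s \<bullet> v = 0"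
      proof (intro allI impI ballI)
        fix j s assume "j < N" "s \<in> outcomes R L (fst (grp j)) (snd (grp j))"
        then have "orthogonal v (G j s)" using v(2) inspan by blast
        then show "G j s \<bullet> v = 0" unfolding orthogonal_def by (metis inner_commute)
      qed
      then have "fisher_info N (\<lambda>j. outcomes R L (fst (grp j)) (snd (grp j))) (qsens Pth sub gam L grp) G th *v v = 0"
        by (rule fisher_mulv_zero)
      then show "\<not> invertible (fisher_info N (\<lambda>j. outcomes R L (fst (grp j)) (snd (grp j))) (qsens Pth sub gam L grp) G th)"
        using v(1) by (rule not_invertible_kernel)
    qed
  next
    assume C: "\<forall>j<N. \<forall>s\<in>outcomes R L (fst (grp j)) (snd (grp j)).
         continuous_on Th (\<lambda>t. qsens Pth sub gam L grp j s t)"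
    have K: "\<exists>th\<in>V. \<not> identifiable_point Th N Pth sub gam L grp th"
      if V: "open V" "V \<noteq> {}" "V \<subseteq> Th" for V
    proof -
      have contF: "continuous_on V ((\<lambda>(p, m, s). Qf Pth sub gam L p m s) i)" if "i \<in> I" for i
      proof -
        obtain p m s where i: "i = (p, m, s)" by (cases i) auto
        have pm: "p < P" "m < M p" "s \<in> outcomes R L p m" using that i by (auto simp: I_def)
        have r: "rep p m < N" "grp (rep p m) = (p, m)" using rep[OF pm(1,2)] by auto
        have "continuous_on Th (q (rep p m) s)" using C r pm by (simp add: q_def)
        moreover have "q (rep p m) s = Qf Pth sub gam L p m s" using r by (simp add: qQ fun_eq_iff)
        ultimately show ?thesis using V(3) i by (simp add: continuous_on_subset)
      qed
      obtain x y where xy: "x \<in> V" "y \<in> V" "x \<noteq> y"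
        and eqI: "\<forall>i\<in>I. (\<lambda>(p, m, s). Qf Pth sub gam L p m s) i x = (\<lambda>(p, m, s). Qf Pth sub gam L p m s) i y"
        using no_inj[where F="\<lambda>i. (case i of (p, m, s) \<Rightarrow> Qf Pth sub gam L p m s)" and I=I and V=V, OF finI cardI V(1,2) contF] by blast
      have xT: "x \<in> Th" and yT: "y \<in> Th" using xy V(3) by auto
      have Qeq: "Qf Pth sub gam L p m s x = Qf Pth sub gam L p m s y" if pm: "p < P" "m < M p" for p m s
      proof -
        have oth: "Qf Pth sub gam L p m s' x = Qf Pth sub gam L p m s' y"
          if "s' \<in> outcomes R L p m" "s' \<noteq> s0 p m" for s'
          using eqI that pm by (auto simp: I_def)
        show ?thesis
        proof (cases "s \<in> outcomes R L p m")
          case False then show ?thesis using QP(2)[OF pm xT] QP(2)[OF pm yT] by simp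
        next
          case True
          show ?thesis
          proof (cases "s = s0 p m")
            case False then show ?thesis using oth True by simp
          next
            case s: True
            have split: "Qf Pth sub gam L p m s t = 1 - (\<Sum>s'\<in>outcomes R L p m - {s}. Qf Pth sub gam L p m s' t)"
              if "t \<in> Th" for t
              using QP(1)[OF pm that] True outcomes_finite by (simp add: sum.remove)
            have "(\<Sum>s'\<in>outcomes R L p m - {s}. Qf Pth sub gam L p m s' x)
                = (\<Sum>s'\<in>outcomes R L p m - {s}. Qf Pth sub gam L p m s' y)"
              using oth s by (intro sum.cong) auto
            then show ?thesis using split[OF xT] split[OF yT] by simp
          qed
        qed
      qed
      have qeq: "qsens Pth sub gam L grp j s x = qsens Pth sub gam L grp j s y" if "j < N" for j s
        using Qeq[of "fst (grp j)" "snd (grp j)" s] grp_range that by (simp add: qsens_Qf)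
      have pr: "pr_u N Pth sub gam L grp u t = enn2real (\<Prod>j<N. ennreal (qsens Pth sub gam L grp j (u j) t))"
        if "t \<in> Th" for u t
        by (rule pr_u_eq) (use models grp_range Es that in auto)
      have "pr_u N Pth sub gam L grp u x = pr_u N Pth sub gam L grp u y" for u
        unfolding pr[OF xT] pr[OF yT] using qeq by (metis (no_types, lifting) lessThan_iff prod.cong)
      then have "obs_equiv N Pth sub gam L grp x y" using xy(3) by (simp add: obs_equiv_def)
      then have "\<not> identifiable_point Th N Pth sub gam L grp x" using yT by (auto simp: identifiable_point_def)
      then show ?thesis using xy(1) by blast
    qed
    show "\<not> identifiable_space Th N Pth sub gam L grp"
      using K[OF open_interior int_ne interior_subset] interior_subset
      by (auto simp: identifiable_space_def)
    show "\<forall>U. open U \<and> U \<noteq> {} \<and> U \<subseteq> Th \<longrightarrow>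
                 infinite {th\<in>U. \<not> identifiable_point Th N Pth sub gam L grp th}"
    proof (intro allI impI notI)
      fix U assume U: "open U \<and> U \<noteq> {} \<and> U \<subseteq> Th"
        and fin: "finite {th\<in>U. \<not> identifiable_point Th N Pth sub gam L grp th}"
      define F where "F = {th\<in>U. \<not> identifiable_point Th N Pth sub gam L grp th}"
      have oV: "open (U - F)" using U fin unfolding F_def by (intro open_Diff finite_imp_closed) auto
      have "U - F \<noteq> {}"
      proof
        assume "U - F = {}"
        then have "finite U" using fin unfolding F_def by (metis Diff_eq_empty_iff finite_subset)
        then show False using U finite_imp_not_open by blast
      qed
      then obtain th where "th \<in> U - F" "\<not> identifiable_point Th N Pth sub gam L grp th"
        using K[OF oV] U by blast
      then show False unfolding F_def by blast
    qed
  qed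
qed

end
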